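(* Let $\mathbb{K}$ be an $\aleph_0$-complete field. Let $x=(x_1,\ldots,x_n)$, $Y=(Y_1,\ldots,Y_m)$, $f=(f_1,\ldots,f_r)\in\mathbb{K}[\![x]\!][Y]^r$ and $J_i\subset\{1,\ldots,n\}$ for $i=1,\ldots,m$. Then there exists a map $\nu:\mathbb{N}^m\to\mathbb{N}$ such that: if $c=(c_1,\ldots,c_m)\in\mathbb{N}^m$ and $y'=(y'_1,\ldots,y'_m)$ with $y'_i\in\mathbb{K}[\![x_{J_i}]\!]$ for $i=1,\ldots,m$ satisfies $f(y')\equiv 0$ modulo $(x)^{\nu(c)}$ and $\mathrm{ord}(y'_i)=c_i$ for $i=1,\ldots,m$, then there exist $y_i\in\mathbb{K}[\![x_{J_i}]\!]$, $i=1,\ldots,m$, such that $y=(y_1,\ldots,y_m)$ satisfies $f(y)=0$ and $\mathrm{ord}(y_i)=c_i$ for all $i=1,\ldots,m$.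
   Context: A field $\mathbb{K}$ is called $\aleph_0$-complete if every countable system $\mathcal S$ of polynomial equations with coefficients in $\mathbb{K}$ (in a countable number of indeterminates) has a solution in $\mathbb{K}$ if and only if every finite sub-system of $\mathcal S$ has a solution in $\mathbb{K}$. For $J\subset\{1,\ldots,n\}$, $\mathbb{K}[\![x_J]\!]$ denotes the subring of $\mathbb{K}[\![x]\!]$ of formal power series in the variables $x_j$, $j\in J$ only. $(x)$ is the maximal ideal of $\mathbb{K}[\![x]\!]$. For a power series $g$, $\mathrm{ord}(g)$ is the smallest total degree of a monomial appearing in $g$ with nonzero coefficient. *)

theory Defs
  imports Main "HOL-Library.Extended_Nat"
begin

text \<open>A polynomial over 'a in the indeterminates z_0, z_1, ... is a coefficient
function on exponent vectors (nat => nat); it is well-formed if it has finitely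
many nonzero coefficients, each at a finitely supported exponent vector.\<close>

definition cpoly_wf :: "((nat \<Rightarrow> nat) \<Rightarrow> 'a::zero) \<Rightarrow> bool" where
  "cpoly_wf p \<longleftrightarrow> finite {\<alpha>. p \<alpha> \<noteq> 0} \<and> (\<forall>\<alpha>. p \<alpha> \<noteq> 0 \<longrightarrow> finite {i. \<alpha> i \<noteq> 0})"

definition cpoly_eval :: "((nat \<Rightarrow> nat) \<Rightarrow> 'a::comm_ring_1) \<Rightarrow> (nat \<Rightarrow> 'a) \<Rightarrow> 'a" where
  "cpoly_eval p z = (\<Sum>\<alpha>\<in>{\<alpha>. p \<alpha> \<noteq> 0}. p \<alpha> * (\<Prod>i\<in>{i. \<alpha> i \<noteq> 0}. z i ^ \<alpha> i))"

definition aleph0_complete :: "'a::field itself \<Rightarrow> bool" where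
  "aleph0_complete _ \<longleftrightarrow>
     (\<forall>S :: ((nat \<Rightarrow> nat) \<Rightarrow> 'a) set. countable S \<and> (\<forall>p\<in>S. cpoly_wf p) \<longrightarrow>
        ((\<exists>z. \<forall>p\<in>S. cpoly_eval p z = 0) \<longleftrightarrow>
         (\<forall>F. F \<subseteq> S \<and> finite F \<longrightarrow> (\<exists>z. \<forall>p\<in>F. cpoly_eval p z = 0))))"

text \<open>K[[x_J]] consists of those series whose nonzero coefficients only occur at
exponent vectors supported in J; K[[x_1..x_n]] is K[[x_{0..<n}]] (0-indexed).\<close>

type_synonym 'a mps = "(nat \<Rightarrow> nat) \<Rightarrow> 'a"

definition mps_in :: "nat set \<Rightarrow> 'a::zero mps \<Rightarrow> bool" where
  "mps_in J g \<longleftrightarrow> (\<forall>\<alpha>. g \<alpha> \<noteq> 0 \<longrightarrow> (\<forall>i. i \<notin> J \<longrightarrow> \<alpha> i = 0))"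

definition mps_zero :: "'a::zero mps" where
  "mps_zero = (\<lambda>_. 0)"

definition mps_one :: "'a::{zero,one} mps" where
  "mps_one = (\<lambda>\<alpha>. if \<alpha> = (\<lambda>_. 0) then 1 else 0)"

definition mps_mult :: "'a::comm_ring_1 mps \<Rightarrow> 'a mps \<Rightarrow> 'a mps" where
  "mps_mult f g = (\<lambda>\<alpha>. \<Sum>\<beta>\<in>{\<beta>. \<forall>i. \<beta> i \<le> \<alpha> i}. f \<beta> * g (\<lambda>i. \<alpha> i - \<beta> i))"

definition mps_pow :: "'a::comm_ring_1 mps \<Rightarrow> nat \<Rightarrow> 'a mps" where
  "mps_pow g k = ((mps_mult g) ^^ k) mps_one"

definition mdeg :: "(nat \<Rightarrow> nat) \<Rightarrow> nat" where
  "mdeg \<alpha> = (\<Sum>i\<in>{i. \<alpha> i \<noteq> 0}. \<alpha> i)"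

definition mps_ord :: "'a::zero mps \<Rightarrow> enat" where
  "mps_ord g = (if g = mps_zero then \<infinity>
               else enat (LEAST d. \<exists>\<alpha>. g \<alpha> \<noteq> 0 \<and> mdeg \<alpha> = d))"

definition mps_in_maxpow :: "nat \<Rightarrow> 'a::zero mps \<Rightarrow> bool" where
  "mps_in_maxpow N g \<longleftrightarrow> (\<forall>\<alpha>. g \<alpha> \<noteq> 0 \<longrightarrow> N \<le> mdeg \<alpha>)"

definition ypoly_wf :: "nat \<Rightarrow> nat \<Rightarrow> ((nat \<Rightarrow> nat) \<Rightarrow> 'a::zero mps) \<Rightarrow> bool" where
  "ypoly_wf n m P \<longleftrightarrow> finite {\<gamma>. P \<gamma> \<noteq> mps_zero} \<and>
     (\<forall>\<gamma>. P \<gamma> \<noteq> mps_zero \<longrightarrow> (\<forall>i. m \<le> i \<longrightarrow> \<gamma> i = 0)) \<and>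
     (\<forall>\<gamma>. mps_in {0..<n} (P \<gamma>))"

definition ymonom :: "nat \<Rightarrow> (nat \<Rightarrow> 'a::comm_ring_1 mps) \<Rightarrow> (nat \<Rightarrow> nat) \<Rightarrow> 'a mps" where
  "ymonom m y \<gamma> = foldr (\<lambda>i acc. mps_mult (mps_pow (y i) (\<gamma> i)) acc) [0..<m] mps_one"

definition ypoly_eval :: "nat \<Rightarrow> ((nat \<Rightarrow> nat) \<Rightarrow> 'a::comm_ring_1 mps) \<Rightarrow> (nat \<Rightarrow> 'a mps) \<Rightarrow> 'a mps" where
  "ypoly_eval m P y = (\<lambda>\<alpha>. \<Sum>\<gamma>\<in>{\<gamma>. P \<gamma> \<noteq> mps_zero}. mps_mult (P \<gamma>) (ymonom m y \<gamma>) \<alpha>)"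

end

theory Submission
  imports Defs "HOL-Library.Countable_Set" "HOL-Library.FuncSet"
begin


definition FS :: "(nat \<Rightarrow> nat) set" where "FS = {\<alpha>. finite {i. \<alpha> i \<noteq> 0}}"

definition mono_ev :: "(nat \<Rightarrow> nat) \<Rightarrow> (nat \<Rightarrow> 'a::comm_ring_1) \<Rightarrow> 'a" where
  "mono_ev \<alpha> z = (\<Prod>i\<in>{i. \<alpha> i \<noteq> 0}. z i ^ \<alpha> i)"

lemma cpoly_eval_alt: "cpoly_eval p z = (\<Sum>\<alpha>\<in>{\<alpha>. p \<alpha> \<noteq> 0}. p \<alpha> * mono_ev \<alpha> z)"
  by (simp add: cpoly_eval_def mono_ev_def)

lemma eval_superset:
  assumes "finite A" "{\<alpha>. p \<alpha> \<noteq> 0} \<subseteq> A"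
  shows "cpoly_eval p z = (\<Sum>\<alpha>\<in>A. p \<alpha> * mono_ev \<alpha> z)"
  unfolding cpoly_eval_alt
  by (rule sum.mono_neutral_left) (use assms in auto)

lemma mono_ev_superset:
  assumes "finite U" "{i. \<alpha> i \<noteq> 0} \<subseteq> U"
  shows "mono_ev \<alpha> z = (\<Prod>i\<in>U. z i ^ \<alpha> i)"
  unfolding mono_ev_def
  by (rule prod.mono_neutral_left) (use assms in auto)

lemma mono_ev_add:
  assumes "finite {i. \<alpha> i \<noteq> 0}" "finite {i. \<beta> i \<noteq> 0}"
  shows "mono_ev (\<lambda>i. \<alpha> i + \<beta> i) z = mono_ev \<alpha> z * mono_ev \<beta> z"
proof -
  define U where "U = {i. \<alpha> i \<noteq> 0} \<union> {i. \<beta> i \<noteq> 0}"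
  have fU: "finite U" using assms by (simp add: U_def)
  have "mono_ev (\<lambda>i. \<alpha> i + \<beta> i) z = (\<Prod>i\<in>U. z i ^ (\<alpha> i + \<beta> i))"
    by (rule mono_ev_superset[OF fU]) (auto simp: U_def)
  also have "\<dots> = (\<Prod>i\<in>U. z i ^ \<alpha> i) * (\<Prod>i\<in>U. z i ^ \<beta> i)"
    by (simp add: power_add prod.distrib)
  also have "\<dots> = mono_ev \<alpha> z * mono_ev \<beta> z"
  proof -
    have "mono_ev \<alpha> z = (\<Prod>i\<in>U. z i ^ \<alpha> i)" by (rule mono_ev_superset[OF fU]) (auto simp: U_def)
    moreover have "mono_ev \<beta> z = (\<Prod>i\<in>U. z i ^ \<beta> i)" by (rule mono_ev_superset[OF fU]) (auto simp: U_def)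
    ultimately show ?thesis by simp
  qed
  finally show ?thesis .
qed

definition polyfun :: "((nat \<Rightarrow> 'a::comm_ring_1) \<Rightarrow> 'a) \<Rightarrow> bool" where
  "polyfun F \<longleftrightarrow> (\<exists>p. cpoly_wf p \<and> (\<forall>z. cpoly_eval p z = F z))"

lemma polyfun_const: "polyfun (\<lambda>z. c)"
proof -
  define p where "p = (\<lambda>\<alpha>::nat\<Rightarrow>nat. if \<alpha> = (\<lambda>_. 0) then c else 0)"
  have s: "{\<alpha>. p \<alpha> \<noteq> 0} \<subseteq> {\<lambda>_. 0}" by (auto simp: p_def split: if_splits)
  have "cpoly_wf p" unfolding cpoly_wf_def using s by (auto intro: finite_subset)
  moreover have "cpoly_eval p z = c" for z
    by (subst eval_superset[OF _ s]) (auto simp: p_def mono_ev_def)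
  ultimately show ?thesis unfolding polyfun_def by blast
qed

lemma polyfun_var: "polyfun (\<lambda>z. z i :: 'a::field)"
proof -
  define e where "e = (\<lambda>j::nat. if j = i then 1::nat else 0)"
  define p where "p = (\<lambda>\<alpha>::nat\<Rightarrow>nat. if \<alpha> = e then 1::'a else 0)"
  have s: "{\<alpha>. p \<alpha> \<noteq> 0} \<subseteq> {e}" by (auto simp: p_def split: if_splits)
  have se: "{j. e j \<noteq> 0} = {i}" by (auto simp: e_def)
  have "cpoly_wf p" unfolding cpoly_wf_def using s se by (auto intro: finite_subset)
  moreover have "cpoly_eval p z = z i" for z
    by (subst eval_superset[OF _ s]) (auto simp: p_def mono_ev_def se, simp add: e_def)
  ultimately show ?thesis unfolding polyfun_def by blast
qed

lemma polyfun_add: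
  assumes "polyfun F" "polyfun G" shows "polyfun (\<lambda>z. F z + G z)"
proof -
  obtain p where p: "cpoly_wf p" "\<And>z. cpoly_eval p z = F z" using assms(1) unfolding polyfun_def by blast
  obtain q where q: "cpoly_wf q" "\<And>z. cpoly_eval q z = G z" using assms(2) unfolding polyfun_def by blast
  define r where "r = (\<lambda>\<alpha>. p \<alpha> + q \<alpha>)"
  define A where "A = {\<alpha>. p \<alpha> \<noteq> 0} \<union> {\<alpha>. q \<alpha> \<noteq> 0}"
  have fA: "finite A" using p(1) q(1) by (simp add: A_def cpoly_wf_def)
  have s: "{\<alpha>. r \<alpha> \<noteq> 0} \<subseteq> A" by (auto simp: r_def A_def)
  have "cpoly_wf r" unfolding cpoly_wf_def
  proof
    show "finite {\<alpha>. r \<alpha> \<noteq> 0}" using s fA by (rule finite_subset)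
    show "\<forall>\<alpha>. r \<alpha> \<noteq> 0 \<longrightarrow> finite {i. \<alpha> i \<noteq> 0}"
    proof (intro allI impI)
      fix \<alpha> assume "r \<alpha> \<noteq> 0"
      then have "p \<alpha> \<noteq> 0 \<or> q \<alpha> \<noteq> 0" by (auto simp: r_def)
      then show "finite {i. \<alpha> i \<noteq> 0}"
      proof
        assume "p \<alpha> \<noteq> 0" with p(1) show ?thesis by (simp add: cpoly_wf_def)
      next
        assume "q \<alpha> \<noteq> 0" with q(1) show ?thesis by (simp add: cpoly_wf_def)
      qed
    qed
  qed
  moreover have "cpoly_eval r z = F z + G z" for z
  proof -
    have "cpoly_eval r z = (\<Sum>\<alpha>\<in>A. p \<alpha> * mono_ev \<alpha> z) + (\<Sum>\<alpha>\<in>A. q \<alpha> * mono_ev \<alpha> z)"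
      by (subst eval_superset[OF fA s]) (simp add: r_def distrib_right sum.distrib)
    also have "\<dots> = F z + G z"
    proof -
      have "cpoly_eval p z = (\<Sum>\<alpha>\<in>A. p \<alpha> * mono_ev \<alpha> z)" by (rule eval_superset[OF fA]) (auto simp: A_def)
      moreover have "cpoly_eval q z = (\<Sum>\<alpha>\<in>A. q \<alpha> * mono_ev \<alpha> z)" by (rule eval_superset[OF fA]) (auto simp: A_def)
      ultimately show ?thesis using p(2) q(2) by simp
    qed
    finally show ?thesis .
  qed
  ultimately show ?thesis unfolding polyfun_def by blast
qed

lemma polyfun_mult:
  assumes "polyfun F" "polyfun G" shows "polyfun (\<lambda>z. F z * G z)"
proof -
  obtain p where p: "cpoly_wf p" "\<And>z. cpoly_eval p z = F z" using assms(1) unfolding polyfun_def by blast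
  obtain q where q: "cpoly_wf q" "\<And>z. cpoly_eval q z = G z" using assms(2) unfolding polyfun_def by blast
  define P where "P = {\<alpha>. p \<alpha> \<noteq> 0}"
  define Q where "Q = {\<alpha>. q \<alpha> \<noteq> 0}"
  define h where "h = (\<lambda>x::(nat\<Rightarrow>nat)\<times>(nat\<Rightarrow>nat). (\<lambda>i. fst x i + snd x i))"
  define r where "r = (\<lambda>\<gamma>. \<Sum>x\<in>{x. x \<in> P\<times>Q \<and> h x = \<gamma>}. p (fst x) * q (snd x))"
  have fP: "finite P" and fQ: "finite Q" using p(1) q(1) unfolding cpoly_wf_def P_def Q_def by blast+
  have r0: "r \<gamma> = 0" if "\<gamma> \<notin> h ` (P \<times> Q)" for \<gamma>
  proof -
    have "{x. x \<in> P\<times>Q \<and> h x = \<gamma>} = {}" using that by blast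
    then show ?thesis unfolding r_def by (simp only: sum.empty)
  qed
  have suppr: "{\<gamma>. r \<gamma> \<noteq> 0} \<subseteq> h ` (P \<times> Q)" using r0 by blast
  have fs: "finite {i. fst x i \<noteq> 0}" "finite {i. snd x i \<noteq> 0}" if "x \<in> P \<times> Q" for x
    using that p(1) q(1) unfolding cpoly_wf_def P_def Q_def by auto
  have finsupp: "finite {i. h x i \<noteq> 0}" if "x \<in> P \<times> Q" for x
  proof -
    have "{i. h x i \<noteq> 0} \<subseteq> {i. fst x i \<noteq> 0} \<union> {i. snd x i \<noteq> 0}" by (auto simp: h_def)
    then show ?thesis using fs[OF that] by (rule finite_subset[OF _ finite_UnI])
  qed
  have fimg: "finite (h ` (P \<times> Q))" using fP fQ by simp
  have wf: "cpoly_wf r" unfolding cpoly_wf_def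
  proof
    show "finite {\<alpha>. r \<alpha> \<noteq> 0}" using suppr fimg by (rule finite_subset)
    show "\<forall>\<alpha>. r \<alpha> \<noteq> 0 \<longrightarrow> finite {i. \<alpha> i \<noteq> 0}" using suppr finsupp by blast
  qed
  have "cpoly_eval r z = F z * G z" for z
  proof -
    have "cpoly_eval r z = (\<Sum>\<gamma>\<in>h ` (P \<times> Q). r \<gamma> * mono_ev \<gamma> z)"
      by (rule eval_superset[OF fimg suppr])
    also have "\<dots> = (\<Sum>\<gamma>\<in>h ` (P \<times> Q). \<Sum>x\<in>{x. x \<in> P\<times>Q \<and> h x = \<gamma>}. p (fst x) * q (snd x) * mono_ev (h x) z)"
      unfolding r_def sum_distrib_right by (intro sum.cong refl) auto
    also have "\<dots> = (\<Sum>x\<in>P\<times>Q. p (fst x) * q (snd x) * mono_ev (h x) z)"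
      by (rule sum.group[OF _ fimg]) (use fP fQ in auto)
    also have "\<dots> = (\<Sum>x\<in>P\<times>Q. (p (fst x) * mono_ev (fst x) z) * (q (snd x) * mono_ev (snd x) z))"
    proof (intro sum.cong refl)
      fix x assume x: "x \<in> P \<times> Q"
      have "mono_ev (h x) z = mono_ev (fst x) z * mono_ev (snd x) z"
        unfolding h_def by (rule mono_ev_add[OF fs[OF x]])
      then show "p (fst x) * q (snd x) * mono_ev (h x) z = (p (fst x) * mono_ev (fst x) z) * (q (snd x) * mono_ev (snd x) z)"
        by (simp add: ac_simps)
    qed
    also have "\<dots> = (\<Sum>a\<in>P. p a * mono_ev a z) * (\<Sum>b\<in>Q. q b * mono_ev b z)"
      by (simp add: sum_product sum.cartesian_product case_prod_beta)
    also have "\<dots> = cpoly_eval p z * cpoly_eval q z"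
      by (simp add: cpoly_eval_alt P_def Q_def)
    finally show ?thesis using p q by simp
  qed
  then show ?thesis using wf unfolding polyfun_def by blast
qed

lemma polyfun_sum:
  assumes "\<And>x. x \<in> A \<Longrightarrow> polyfun (F x)" shows "polyfun (\<lambda>z. \<Sum>x\<in>A. F x z)"
proof (cases "finite A")
  case True then show ?thesis using assms
  proof (induction A rule: finite_induct)
    case empty then show ?case using polyfun_const[of 0] by simp
  next
    case (insert a A)
    have "polyfun (\<lambda>z. F a z + (\<Sum>x\<in>A. F x z))" by (rule polyfun_add) (use insert in auto)
    then show ?case using insert by simp
  qed
next
  case False then show ?thesis using polyfun_const[of 0] by simp
qed

lemma polyfun_diff:
  assumes "polyfun F" "polyfun G" shows "polyfun (\<lambda>z. F z - G z)"
proof -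
  have "polyfun (\<lambda>z. F z + (-1) * G z)"
    by (intro polyfun_add polyfun_mult assms polyfun_const)
  then show ?thesis by simp
qed



definition coeffpoly :: "((nat \<Rightarrow> 'a::comm_ring_1) \<Rightarrow> 'a mps) \<Rightarrow> bool" where
  "coeffpoly A \<longleftrightarrow> (\<forall>\<alpha>. polyfun (\<lambda>z. A z \<alpha>))"

lemma coeffpoly_const: "coeffpoly (\<lambda>z. g)"
  unfolding coeffpoly_def by (simp add: polyfun_const)

lemma coeffpoly_mult:
  assumes "coeffpoly A" "coeffpoly B"
  shows "coeffpoly (\<lambda>z. mps_mult (A z) (B z))"
  unfolding coeffpoly_def mps_mult_def
proof
  fix \<alpha>
  show "polyfun (\<lambda>z. \<Sum>\<beta>\<in>{\<beta>. \<forall>i. \<beta> i \<le> \<alpha> i}. A z \<beta> * B z (\<lambda>i. \<alpha> i - \<beta> i))"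
    using assms unfolding coeffpoly_def by (intro polyfun_sum polyfun_mult) auto
qed

lemma coeffpoly_pow:
  assumes "coeffpoly A"
  shows "coeffpoly (\<lambda>z. mps_pow (A z) k)"
proof (induction k)
  case 0
  then show ?case unfolding mps_pow_def by (simp add: coeffpoly_const)
next
  case (Suc k)
  have "coeffpoly (\<lambda>z. mps_mult (A z) (mps_pow (A z) k))"
    by (rule coeffpoly_mult[OF assms Suc])
  then show ?case unfolding mps_pow_def by simp
qed

lemma coeffpoly_foldr:
  assumes "\<And>i. coeffpoly (\<lambda>z. y z i)"
  shows "coeffpoly (\<lambda>z. foldr (\<lambda>i acc. mps_mult (mps_pow (y z i) (\<gamma> i)) acc) xs mps_one)"
proof (induction xs)
  case Nil
  then show ?case by (simp add: coeffpoly_const)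
next
  case (Cons a xs)
  then show ?case by (simp add: coeffpoly_mult coeffpoly_pow assms)
qed

lemma polyfun_ypoly_eval:
  assumes "\<And>i. coeffpoly (\<lambda>z. y z i)"
  shows "polyfun (\<lambda>z. ypoly_eval m P (y z) \<alpha>)"
proof -
  have "coeffpoly (\<lambda>z. mps_mult (P \<gamma>) (ymonom m (y z) \<gamma>))" for \<gamma>
    unfolding ymonom_def by (intro coeffpoly_mult coeffpoly_const coeffpoly_foldr assms)
  then show ?thesis unfolding ypoly_eval_def coeffpoly_def
    by (intro polyfun_sum) auto
qed

lemma infinite_below:
  assumes "\<alpha> \<notin> FS"
  shows "infinite {\<beta>::nat\<Rightarrow>nat. \<forall>i. \<beta> i \<le> \<alpha> i}"
proof
  assume fin: "finite {\<beta>::nat\<Rightarrow>nat. \<forall>i. \<beta> i \<le> \<alpha> i}"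
  define g where "g = (\<lambda>i. (\<lambda>j. if j = i then \<alpha> i else 0))"
  have "inj_on g {i. \<alpha> i \<noteq> 0}"
  proof (rule inj_onI)
    fix a b assume "a \<in> {i. \<alpha> i \<noteq> 0}" "b \<in> {i. \<alpha> i \<noteq> 0}" "g a = g b"
    then have "g a a = g b a" by simp
    then show "a = b" using \<open>a \<in> _\<close> unfolding g_def by (cases "a = b") auto
  qed
  moreover have "g ` {i. \<alpha> i \<noteq> 0} \<subseteq> {\<beta>. \<forall>i. \<beta> i \<le> \<alpha> i}" by (auto simp: g_def)
  moreover have "finite (g ` {i. \<alpha> i \<noteq> 0})" by (rule finite_subset[OF calculation(2) fin])
  ultimately have "finite {i. \<alpha> i \<noteq> 0}" by (blast intro: finite_imageD)
  then show False using assms by (simp add: FS_def)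
qed

lemma mps_mult_nonFS: "\<alpha> \<notin> FS \<Longrightarrow> mps_mult g h \<alpha> = 0"
  unfolding mps_mult_def using infinite_below by simp

lemma ypoly_eval_nonFS: "\<alpha> \<notin> FS \<Longrightarrow> ypoly_eval m P y \<alpha> = 0"
  unfolding ypoly_eval_def by (simp add: mps_mult_nonFS)

lemma ymonom_cong: "(\<And>i. i < m \<Longrightarrow> y i = y2 i) \<Longrightarrow> ymonom m y = ymonom m y2"
  unfolding ymonom_def by (intro ext foldr_cong) auto

lemma ypoly_eval_cong:
  assumes "\<And>i. i < m \<Longrightarrow> y i = y2 i" shows "ypoly_eval m P y = ypoly_eval m P y2"
proof -
  have "ymonom m y = ymonom m y2" by (rule ymonom_cong) (rule assms)
  then show ?thesis unfolding ypoly_eval_def by simp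
qed

lemma countable_FS: "countable FS"
proof -
  define L where "L = (\<lambda>xs::nat list. (\<lambda>i. if i < length xs then xs ! i else 0))"
  have "FS \<subseteq> range L"
  proof
    fix \<alpha> assume "\<alpha> \<in> FS"
    then have "finite {i. \<alpha> i \<noteq> 0}" by (simp add: FS_def)
    then obtain b where b: "{i. \<alpha> i \<noteq> 0} \<subseteq> {..<b}" using finite_nat_bounded by blast
    have "L (map \<alpha> [0..<b]) = \<alpha>"
    proof
      fix i show "L (map \<alpha> [0..<b]) i = \<alpha> i"
      proof (cases "i < b")
        case True then show ?thesis by (simp add: L_def)
      next
        case False then have "\<alpha> i = 0" using b by auto
        then show ?thesis using False by (simp add: L_def)
      qed
    qed
    then show "\<alpha> \<in> range L" by (metis rangeI)
  qed
  moreover have "countable (range L)" by (rule countable_image) simp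
  ultimately show ?thesis by (rule countable_subset)
qed

definition suppIn :: "nat set \<Rightarrow> (nat \<Rightarrow> nat) \<Rightarrow> bool" where
  "suppIn A \<alpha> \<longleftrightarrow> (\<forall>i. i \<notin> A \<longrightarrow> \<alpha> i = 0)"

lemma suppIn_FS: "finite A \<Longrightarrow> suppIn A \<alpha> \<Longrightarrow> \<alpha> \<in> FS"
proof -
  assume "finite A" "suppIn A \<alpha>"
  then have "{i. \<alpha> i \<noteq> 0} \<subseteq> A" by (auto simp: suppIn_def)
  then show ?thesis using \<open>finite A\<close> unfolding FS_def by (simp add: finite_subset)
qed

lemma le_mdeg: "\<alpha> \<in> FS \<Longrightarrow> \<alpha> j \<le> mdeg \<alpha>"
  unfolding mdeg_def FS_def
  by (cases "\<alpha> j = 0") (auto intro: member_le_sum)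

lemma finite_bounded_supp:
  assumes "finite A"
  shows "finite {\<alpha>::nat\<Rightarrow>nat. suppIn A \<alpha> \<and> (\<forall>j. \<alpha> j \<le> d)}"
proof -
  let ?S = "{\<alpha>::nat\<Rightarrow>nat. suppIn A \<alpha> \<and> (\<forall>j. \<alpha> j \<le> d)}"
  have "inj_on (\<lambda>\<alpha>. restrict \<alpha> A) ?S"
  proof (rule inj_onI)
    fix a b assume "a \<in> ?S" "b \<in> ?S" "restrict a A = restrict b A"
    show "a = b"
    proof
      fix j show "a j = b j"
      proof (cases "j \<in> A")
        case True
        have "restrict a A j = restrict b A j" using \<open>restrict a A = restrict b A\<close> by simp
        then show ?thesis using True by simp
      next
        case False
        then show ?thesis using \<open>a \<in> ?S\<close> \<open>b \<in> ?S\<close> by (simp add: suppIn_def)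
      qed
    qed
  qed
  moreover have "(\<lambda>\<alpha>. restrict \<alpha> A) ` ?S \<subseteq> PiE A (\<lambda>_. {..d})" by auto
  moreover have "finite (PiE A (\<lambda>_. {..d}))" using assms by (simp add: finite_PiE)
  ultimately show ?thesis by (meson finite_imageD finite_subset)
qed

lemma ord_dest:
  assumes "mps_ord g = enat d"
  shows "(\<exists>\<alpha>. g \<alpha> \<noteq> 0 \<and> mdeg \<alpha> = d) \<and> (\<forall>\<alpha>. g \<alpha> \<noteq> 0 \<longrightarrow> d \<le> mdeg \<alpha>)"
proof -
  have gz: "g \<noteq> mps_zero" using assms by (auto simp: mps_ord_def)
  then have L: "(LEAST d. \<exists>\<alpha>. g \<alpha> \<noteq> 0 \<and> mdeg \<alpha> = d) = d" using assms by (simp add: mps_ord_def)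
  from gz obtain \<alpha>0 where "g \<alpha>0 \<noteq> 0" by (auto simp: mps_zero_def)
  then have ex: "\<exists>d. \<exists>\<alpha>. g \<alpha> \<noteq> 0 \<and> mdeg \<alpha> = d" by blast
  show ?thesis
  proof
    show "\<exists>\<alpha>. g \<alpha> \<noteq> 0 \<and> mdeg \<alpha> = d" using LeastI_ex[OF ex] L by simp
    show "\<forall>\<alpha>. g \<alpha> \<noteq> 0 \<longrightarrow> d \<le> mdeg \<alpha>"
    proof (intro allI impI)
      fix \<alpha> assume "g \<alpha> \<noteq> 0"
      then have "(LEAST d. \<exists>\<alpha>. g \<alpha> \<noteq> 0 \<and> mdeg \<alpha> = d) \<le> mdeg \<alpha>" by (intro Least_le) blast
      then show "d \<le> mdeg \<alpha>" using L by simp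
    qed
  qed
qed

lemma ord_intro:
  assumes "g \<alpha> \<noteq> 0" "mdeg \<alpha> = d" "\<And>\<beta>. g \<beta> \<noteq> 0 \<Longrightarrow> d \<le> mdeg \<beta>"
  shows "mps_ord g = enat d"
proof -
  have gz: "g \<noteq> mps_zero" using assms(1) by (auto simp: mps_zero_def)
  have "(LEAST d. \<exists>\<alpha>. g \<alpha> \<noteq> 0 \<and> mdeg \<alpha> = d) = d"
    by (rule Least_equality) (use assms in auto)
  then show ?thesis using gz by (simp add: mps_ord_def)
qed



lemma approx_to_exact:
  fixes f :: "nat \<Rightarrow> (nat \<Rightarrow> nat) \<Rightarrow> 'a::field mps"
    and J :: "nat \<Rightarrow> nat set" and c :: "nat \<Rightarrow> nat"
  assumes a0: "aleph0_complete TYPE('a)"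
    and JJ: "\<forall>i<m. J i \<subseteq> {0..<n}"
    and approx: "\<And>N. \<exists>y'. (\<forall>i<m. mps_in (J i) (y' i) \<and> mps_ord (y' i) = enat (c i)) \<and>
                   (\<forall>k<r. mps_in_maxpow N (ypoly_eval m (f k) y'))"
  shows "\<exists>y. (\<forall>i<m. mps_in (J i) (y i) \<and> mps_ord (y i) = enat (c i)) \<and>
            (\<forall>k<r. ypoly_eval m (f k) y = mps_zero)"
proof -
  have finJ: "finite (J i)" if "i < m" for i
    using JJ that by (meson finite_atLeastLessThan finite_subset)
  define V :: "(bool \<times> nat \<times> (nat \<Rightarrow> nat)) set" where "V = UNIV \<times> UNIV \<times> FS"
  have cV: "countable V" unfolding V_def using countable_FS by simp
  define enc where "enc = to_nat_on V"
  define Y :: "(nat \<Rightarrow> 'a) \<Rightarrow> nat \<Rightarrow> 'a mps" where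
    "Y = (\<lambda>z i \<alpha>. if i < m \<and> suppIn (J i) \<alpha> then z (enc (False, i, \<alpha>)) else 0)"
  define B where "B = (\<lambda>i. {\<alpha>. suppIn (J i) \<alpha> \<and> mdeg \<alpha> = c i})"
  have finB: "finite (B i)" if "i < m" for i
  proof -
    have "B i \<subseteq> {\<alpha>. suppIn (J i) \<alpha> \<and> (\<forall>j. \<alpha> j \<le> c i)}"
    proof
      fix \<alpha> assume "\<alpha> \<in> B i"
      then have s: "suppIn (J i) \<alpha>" "mdeg \<alpha> = c i" by (auto simp: B_def)
      have "\<alpha> \<in> FS" by (rule suppIn_FS[OF finJ[OF that] s(1)])
      then have "\<forall>j. \<alpha> j \<le> c i" using le_mdeg[OF \<open>\<alpha> \<in> FS\<close>] s(2) by simp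
      with s show "\<alpha> \<in> {\<alpha>. suppIn (J i) \<alpha> \<and> (\<forall>j. \<alpha> j \<le> c i)}" by simp
    qed
    then show ?thesis using finite_bounded_supp[OF finJ[OF that]] by (rule finite_subset)
  qed
  define E1 where "E1 = (\<lambda>(k::nat, \<alpha>). \<lambda>z. ypoly_eval m (f k) (Y z) \<alpha>)"
  define E2 where "E2 = (\<lambda>(i::nat, \<alpha>). \<lambda>z. Y z i \<alpha>)"
  define E3 where "E3 = (\<lambda>i z. (\<Sum>\<alpha>\<in>B i. z (enc (True, i, \<alpha>)) * Y z i \<alpha>) - 1)"
  define I1 where "I1 = {..<r} \<times> FS"
  define I2 where "I2 = {(i, \<alpha>). i < m \<and> suppIn (J i) \<alpha> \<and> mdeg \<alpha> < c i}"
  define Eqs where "Eqs = E1 ` I1 \<union> E2 ` I2 \<union> E3 ` {..<m}"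
  have I2FS: "I2 \<subseteq> UNIV \<times> FS" using suppIn_FS finJ by (auto simp: I2_def)
  have cEqs: "countable Eqs"
  proof -
    have "countable I1" unfolding I1_def using countable_FS by simp
    moreover have "countable I2" by (rule countable_subset[OF I2FS]) (simp add: countable_FS)
    ultimately show ?thesis unfolding Eqs_def by auto
  qed
  have cpY: "coeffpoly (\<lambda>z. Y z i)" for i
    unfolding coeffpoly_def
  proof
    fix \<alpha>
    show "polyfun (\<lambda>z. Y z i \<alpha>)"
    proof (cases "i < m \<and> suppIn (J i) \<alpha>")
      case True then show ?thesis by (simp add: Y_def polyfun_var)
    next
      case False
      then have "(\<lambda>z. Y z i \<alpha>) = (\<lambda>z. 0)" unfolding Y_def by auto
      then show ?thesis using polyfun_const[of 0] by simp
    qed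
  qed
  have pEqs: "polyfun G" if "G \<in> Eqs" for G
  proof -
    have "polyfun (E1 x)" for x unfolding E1_def by (cases x) (simp add: polyfun_ypoly_eval[of Y, OF cpY])
    moreover have "polyfun (E2 x)" for x using cpY unfolding E2_def coeffpoly_def by (cases x) simp
    moreover have "polyfun (E3 i)" for i unfolding E3_def
      using cpY unfolding coeffpoly_def
      by (intro polyfun_diff polyfun_sum polyfun_mult polyfun_var polyfun_const) auto
    ultimately show ?thesis using that unfolding Eqs_def by auto
  qed
  define pick :: "((nat \<Rightarrow> 'a) \<Rightarrow> 'a) \<Rightarrow> (nat \<Rightarrow> nat) \<Rightarrow> 'a" where "pick = (\<lambda>G. SOME p. cpoly_wf p \<and> (\<forall>z. cpoly_eval p z = G z))"
  have pick: "cpoly_wf (pick G) \<and> (\<forall>z. cpoly_eval (pick G) z = G z)" if "G \<in> Eqs" for G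
    using pEqs[OF that] unfolding polyfun_def pick_def by (rule someI_ex)
  define S where "S = pick ` Eqs"
  have finsub: "\<exists>z. \<forall>G\<in>E. G z = 0" if "E \<subseteq> Eqs" "finite E" for E
  proof -
    have "finite (E \<inter> E1 ` I1)" using that by simp
    moreover have "E \<inter> E1 ` I1 \<subseteq> E1 ` I1" by blast
    ultimately obtain K where K: "K \<subseteq> I1" "finite K" "E \<inter> E1 ` I1 = E1 ` K"
      using finite_subset_image[of "E \<inter> E1 ` I1" E1 I1] by blast
    define N where "N = Suc (\<Sum>x\<in>K. mdeg (snd x))"
    have KN: "mdeg (snd x) < N" if "x \<in> K" for x
    proof -
      have "mdeg (snd x) \<le> (\<Sum>x\<in>K. mdeg (snd x))" by (rule member_le_sum) (use that K(2) in auto)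
      then show ?thesis by (simp add: N_def)
    qed
    obtain y' where y'0: "(\<forall>i<m. mps_in (J i) (y' i) \<and> mps_ord (y' i) = enat (c i)) \<and>
      (\<forall>k<r. mps_in_maxpow N (ypoly_eval m (f k) y'))" using approx[of N] by (elim exE)
    have y': "\<forall>i<m. mps_in (J i) (y' i) \<and> mps_ord (y' i) = enat (c i)"
      "\<forall>k<r. mps_in_maxpow N (ypoly_eval m (f k) y')" using y'0 by simp_all
    have od: "(\<exists>\<alpha>. y' i \<alpha> \<noteq> 0 \<and> mdeg \<alpha> = c i) \<and> (\<forall>\<alpha>. y' i \<alpha> \<noteq> 0 \<longrightarrow> c i \<le> mdeg \<alpha>)" if "i < m" for i
    proof -
      have "mps_ord (y' i) = enat (c i)" using y'(1) that by simp
      then show ?thesis by (rule ord_dest)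
    qed
    define a0 where "a0 = (\<lambda>i. SOME \<alpha>. y' i \<alpha> \<noteq> 0 \<and> mdeg \<alpha> = c i)"
    have a0: "y' i (a0 i) \<noteq> 0 \<and> mdeg (a0 i) = c i" if "i < m" for i
    proof -
      have "\<exists>\<alpha>. y' i \<alpha> \<noteq> 0 \<and> mdeg \<alpha> = c i" using od[OF that] by blast
      then show ?thesis unfolding a0_def by (rule someI_ex)
    qed
    define w where "w = (\<lambda>(b::bool, i::nat, \<alpha>::nat\<Rightarrow>nat). if b then (if \<alpha> = a0 i then inverse (y' i \<alpha>) else 0) else y' i \<alpha>)"
    define z where "z = (\<lambda>j. w (from_nat_into V j))"
    have zenc: "z (enc x) = w x" if "x \<in> V" for x
      using cV that by (simp add: z_def enc_def)
    have Yz: "Y z i = y' i" if "i < m" for i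
    proof
      fix \<alpha>
      show "Y z i \<alpha> = y' i \<alpha>"
      proof (cases "suppIn (J i) \<alpha>")
        case True
        then have "(False, i, \<alpha>) \<in> V" unfolding V_def using suppIn_FS[OF finJ[OF that]] by simp
        then show ?thesis using True that by (simp add: Y_def zenc w_def)
      next
        case False
        then have "y' i \<alpha> = 0" using y'(1) that unfolding mps_in_def suppIn_def by blast
        then show ?thesis using False by (simp add: Y_def)
      qed
    qed
    have ev: "ypoly_eval m P (Y z) = ypoly_eval m P y'" for P
      by (rule ypoly_eval_cong) (rule Yz)
    have "\<forall>G\<in>E. G z = 0"
    proof
      fix G assume "G \<in> E"
      have GEq: "G \<in> Eqs" using that(1) \<open>G \<in> E\<close> by (rule subsetD)
      have d3: "G \<in> E1 ` I1 \<or> G \<in> E2 ` I2 \<or> G \<in> E3 ` {..<m}"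
        using GEq unfolding Eqs_def by (simp only: Un_iff disj_assoc)
      have d1: "G \<in> E1 ` K" if "G \<in> E1 ` I1"
      proof -
        have "G \<in> E \<inter> E1 ` I1" using that \<open>G \<in> E\<close> by (rule IntI[rotated])
        then show ?thesis using K(3) by (simp only:)
      qed
      from d3 d1 consider "G \<in> E1 ` K" | "G \<in> E2 ` I2" | "G \<in> E3 ` {..<m}" by blast
      then show "G z = 0"
      proof cases
        case 1
        then obtain k \<alpha> where k: "(k, \<alpha>) \<in> K" "G = E1 (k, \<alpha>)" by auto
        then have "k < r" using K(1) by (auto simp: I1_def)
        have "mdeg \<alpha> < N" using KN[OF k(1)] by simp
        then have "ypoly_eval m (f k) y' \<alpha> = 0" using y'(2) \<open>k < r\<close> unfolding mps_in_maxpow_def by (meson not_le)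
        then show ?thesis using k(2) ev by (simp add: E1_def)
      next
        case 2
        then obtain i \<alpha> where i: "i < m" "suppIn (J i) \<alpha>" "mdeg \<alpha> < c i" "G = E2 (i, \<alpha>)" by (auto simp: I2_def)
        have "y' i \<alpha> = 0" using od[OF i(1)] i(3) by (meson not_le)
        then show ?thesis using i Yz by (simp add: E2_def)
      next
        case 3
        then obtain i where i: "i < m" "G = E3 i" by auto
        have "(\<Sum>\<alpha>\<in>B i. z (enc (True, i, \<alpha>)) * Y z i \<alpha>) = (\<Sum>\<alpha>\<in>B i. if \<alpha> = a0 i then 1 else 0)"
        proof (rule sum.cong[OF refl])
          fix \<alpha> assume "\<alpha> \<in> B i"
          then have "(True, i, \<alpha>) \<in> V" unfolding V_def B_def using suppIn_FS[OF finJ[OF i(1)]] by simp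
          then show "z (enc (True, i, \<alpha>)) * Y z i \<alpha> = (if \<alpha> = a0 i then 1 else 0)"
            using Yz[OF i(1)] a0[OF i(1)] by (simp add: zenc w_def)
        qed
        also have "\<dots> = 1"
        proof -
          have "a0 i \<in> B i" using a0[OF i(1)] y'(1) i(1) unfolding B_def mps_in_def suppIn_def by blast
          then show ?thesis using finB[OF i(1)] by simp
        qed
        finally show ?thesis using i(2) by (simp add: E3_def)
      qed
    qed
    then show ?thesis by blast
  qed
  have H: "countable S \<and> (\<forall>p\<in>S. cpoly_wf p) \<longrightarrow>
        ((\<exists>z. \<forall>p\<in>S. cpoly_eval p z = 0) \<longleftrightarrow>
         (\<forall>F. F \<subseteq> S \<and> finite F \<longrightarrow> (\<exists>z. \<forall>p\<in>F. cpoly_eval p z = 0)))"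
    using a0 unfolding aleph0_complete_def by (rule spec)
  have cS: "countable S" unfolding S_def using cEqs by simp
  have wS: "\<forall>p\<in>S. cpoly_wf p" unfolding S_def using pick by blast
  have fsS: "\<forall>F. F \<subseteq> S \<and> finite F \<longrightarrow> (\<exists>z. \<forall>p\<in>F. cpoly_eval p z = 0)"
  proof (intro allI impI)
    fix F assume F: "F \<subseteq> S \<and> finite F"
    then obtain E where E: "E \<subseteq> Eqs" "finite E" "F = pick ` E"
      using finite_subset_image[of F pick Eqs] unfolding S_def by blast
    obtain z where z: "\<forall>G\<in>E. G z = 0" using finsub[OF E(1,2)] by blast
    have "\<forall>p\<in>F. cpoly_eval p z = 0"
    proof
      fix p assume "p \<in> F"
      then obtain G where "G \<in> E" "p = pick G" using E(3) by blast
      then show "cpoly_eval p z = 0" using pick[of G] E(1) z by auto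
    qed
    then show "\<exists>z. \<forall>p\<in>F. cpoly_eval p z = 0" by blast
  qed
  from H cS wS fsS obtain z0 where z0: "\<forall>p\<in>S. cpoly_eval p z0 = 0" by blast
  have Gz: "G z0 = 0" if "G \<in> Eqs" for G
    using z0 pick[OF that] that unfolding S_def by auto
  show ?thesis
  proof (intro exI conjI allI impI)
    fix i assume i: "i < m"
    show "mps_in (J i) (Y z0 i)" unfolding mps_in_def Y_def suppIn_def by auto
    have low: "c i \<le> mdeg \<beta>" if "Y z0 i \<beta> \<noteq> 0" for \<beta>
    proof (rule ccontr)
      assume "\<not> c i \<le> mdeg \<beta>"
      moreover have "suppIn (J i) \<beta>" using that by (auto simp: Y_def split: if_splits)
      ultimately have "E2 (i, \<beta>) \<in> Eqs" using i unfolding Eqs_def I2_def by auto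
      then have "E2 (i, \<beta>) z0 = 0" by (rule Gz)
      then show False using that by (simp add: E2_def)
    qed
    have "E3 i \<in> Eqs" using i unfolding Eqs_def by auto
    then have "E3 i z0 = 0" by (rule Gz)
    then have "(\<Sum>\<alpha>\<in>B i. z0 (enc (True, i, \<alpha>)) * Y z0 i \<alpha>) = 1" by (simp add: E3_def)
    have "\<exists>\<alpha>\<in>B i. Y z0 i \<alpha> \<noteq> 0"
    proof (rule ccontr)
      assume "\<not> (\<exists>\<alpha>\<in>B i. Y z0 i \<alpha> \<noteq> 0)"
      then have "(\<Sum>\<alpha>\<in>B i. z0 (enc (True, i, \<alpha>)) * Y z0 i \<alpha>) = 0" by (intro sum.neutral) auto
      with \<open>(\<Sum>\<alpha>\<in>B i. z0 (enc (True, i, \<alpha>)) * Y z0 i \<alpha>) = 1\<close> show False by simp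
    qed
    then obtain \<alpha> where "\<alpha> \<in> B i" "Y z0 i \<alpha> \<noteq> 0" by blast
    then show "mps_ord (Y z0 i) = enat (c i)"
      by (intro ord_intro[of _ \<alpha>]) (auto simp: B_def low)
  next
    fix k assume k: "k < r"
    show "ypoly_eval m (f k) (Y z0) = mps_zero"
    proof
      fix \<alpha>
      show "ypoly_eval m (f k) (Y z0) \<alpha> = mps_zero \<alpha>"
      proof (cases "\<alpha> \<in> FS")
        case True
        then have "E1 (k, \<alpha>) \<in> Eqs" using k unfolding Eqs_def I1_def by auto
        then have "E1 (k, \<alpha>) z0 = 0" by (rule Gz)
        then show ?thesis by (simp add: E1_def mps_zero_def)
      next
        case False then show ?thesis by (simp add: ypoly_eval_nonFS mps_zero_def)
      qed
    qed
  qed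
qed


theorem corollary3p7:
  fixes n m r :: nat
    and f :: "nat \<Rightarrow> (nat \<Rightarrow> nat) \<Rightarrow> 'a::field mps"
    and J :: "nat \<Rightarrow> nat set"
  assumes "aleph0_complete TYPE('a)"
    and "\<forall>k<r. ypoly_wf n m (f k)"
    and "\<forall>i<m. J i \<subseteq> {0..<n}"
  shows "\<exists>\<nu> :: (nat \<Rightarrow> nat) \<Rightarrow> nat. \<forall>c y'.
           (\<forall>i. m \<le> i \<longrightarrow> c i = 0) \<and>
           (\<forall>i<m. mps_in (J i) (y' i) \<and> mps_ord (y' i) = enat (c i)) \<and>
           (\<forall>k<r. mps_in_maxpow (\<nu> c) (ypoly_eval m (f k) y'))
           \<longrightarrow> (\<exists>y. (\<forall>i<m. mps_in (J i) (y i) \<and> mps_ord (y i) = enat (c i)) \<and>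
                    (\<forall>k<r. ypoly_eval m (f k) y = mps_zero))"
proof -
  define P where "P = (\<lambda>(c::nat \<Rightarrow> nat) N. \<exists>y'::nat \<Rightarrow> 'a mps. (\<forall>i<m. mps_in (J i) (y' i) \<and> mps_ord (y' i) = enat (c i)) \<and>
                   (\<forall>k<r. mps_in_maxpow N (ypoly_eval m (f k) y')))"
  define \<nu> where "\<nu> = (\<lambda>c. SOME N. \<not> P c N)"
  show ?thesis
  proof (intro exI[of _ \<nu>] allI impI)
    fix c and y' :: "nat \<Rightarrow> 'a mps"
    assume h: "(\<forall>i. m \<le> i \<longrightarrow> c i = 0) \<and>
           (\<forall>i<m. mps_in (J i) (y' i) \<and> mps_ord (y' i) = enat (c i)) \<and>
           (\<forall>k<r. mps_in_maxpow (\<nu> c) (ypoly_eval m (f k) y'))"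
    show "\<exists>y. (\<forall>i<m. mps_in (J i) (y i) \<and> mps_ord (y i) = enat (c i)) \<and>
                    (\<forall>k<r. ypoly_eval m (f k) y = mps_zero)"
    proof (cases "\<exists>N. \<not> P c N")
      case True
      then have "\<not> P c (\<nu> c)" unfolding \<nu>_def by (rule someI_ex)
      moreover have "P c (\<nu> c)" using h unfolding P_def by blast
      ultimately show ?thesis by blast
    next
      case False
      then have "\<And>N. P c N" by blast
      then have "\<And>N. \<exists>y'. (\<forall>i<m. mps_in (J i) (y' i) \<and> mps_ord (y' i) = enat (c i)) \<and>
                   (\<forall>k<r. mps_in_maxpow N (ypoly_eval m (f k) y'))" unfolding P_def by simp
      then show ?thesis by (rule approx_to_exact[OF assms(1) assms(3)])
    qed
  qed
qed

end
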